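(* Let $q:\mathbb{D}\to\mathbb{C}$, $q(z)=\frac{|1-z|^2}{1-|z|^2}$, and let $g,\tilde g$ be entire functions. Then for all $n\ge0$ and $z\in\mathbb{D}$, $$D^n(g\circ q)(z)=(-1)^n\frac{(1-\bar z)^{2n}}{(1-|z|^2)^n}(g^{(n)}\circ q)(z),\qquad \overline{D}^n(g\circ q)(z)=(-1)^n\frac{(1-z)^{2n}}{(1-|z|^2)^n}(g^{(n)}\circ q)(z),$$ and consequently $\overline{D}^n(g\circ q)\,D^n(\tilde g\circ q)=q^{2n}\,(g^{(n)}\circ q)\,(\tilde g^{(n)}\circ q)$.
   Context: $\mathbb{D}=\{z\in\mathbb{C}:|z|<1\}$. Peschl–Minda derivatives: for $z\in\mathbb{D}$ let $T_z(u)=(z+u)/(1+\bar z u)$; with $\partial=\frac12(\partial_x-i\partial_y)$ the Wirtinger derivative, for smooth $f:\mathbb{D}\to\mathbb{C}$ set $D^nf(z):=\partial_u^n(f\circ T_z)(0)$ and $\overline{D}^nf(z):=\overline{D^n(\bar f)(z)}$. (One has $D^{n+1}f(z)=(1-|z|^2)\,\partial^{n+1}\big[(1-|z|^2)^nf(z)\big]$.) *)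

theory Defs
  imports "HOL-Complex_Analysis.Complex_Analysis"
begin

definition wirtinger :: "(complex \<Rightarrow> complex) \<Rightarrow> complex \<Rightarrow> complex" where
  "wirtinger f z =
     (vector_derivative (\<lambda>t::real. f (z + of_real t)) (at 0)
      - \<i> * vector_derivative (\<lambda>t::real. f (z + \<i> * of_real t)) (at 0)) / 2"

definition disc_aut :: "complex \<Rightarrow> complex \<Rightarrow> complex" where
  "disc_aut z u = (z + u) / (1 + cnj z * u)"

definition PM_D :: "nat \<Rightarrow> (complex \<Rightarrow> complex) \<Rightarrow> complex \<Rightarrow> complex" where
  "PM_D n f z = (wirtinger ^^ n) (\<lambda>u. f (disc_aut z u)) 0"

definition PM_Dbar :: "nat \<Rightarrow> (complex \<Rightarrow> complex) \<Rightarrow> complex \<Rightarrow> complex" where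
  "PM_Dbar n f z = cnj (PM_D n (\<lambda>w. cnj (f w)) z)"

definition qfun :: "complex \<Rightarrow> complex" where
  "qfun z = of_real ((cmod (1 - z))\<^sup>2 / (1 - (cmod z)\<^sup>2))"

end

theory Submission
  imports Defs
begin


definition UU :: "(complex \<times> complex) set" where "UU = ball 0 1 \<times> ball 0 1"

lemma open_UU: "open UU" unfolding UU_def by (intro open_Times) auto

lemma UU_ne: "p \<in> UU \<Longrightarrow> 1 - fst p * snd p \<noteq> 0"
proof
  assume p: "p \<in> UU" and e: "1 - fst p * snd p = 0"
  have "cmod (fst p * snd p) < 1" using p unfolding UU_def
    by (auto simp: norm_mult mult_strict_mono' intro: mult_strict_mono'[where c=1 and d=1, simplified] 
      dest!: mem_ball_0[THEN iffD1] ) (metis mult_less_cancel_right2 mult_strict_mono' norm_ge_zero mult_1)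
  moreover have "fst p * snd p = 1" using e by simp
  ultimately show False by simp
qed

inductive_set SS :: "(complex \<times> complex \<Rightarrow> complex) set" where
  cnst: "(\<lambda>p. c) \<in> SS"
| fs: "fst \<in> SS"
| sn: "snd \<in> SS"
| ww: "(\<lambda>p. 1 / (1 - fst p * snd p)) \<in> SS"
| add: "f \<in> SS \<Longrightarrow> h \<in> SS \<Longrightarrow> (\<lambda>p. f p + h p) \<in> SS"
| mult: "f \<in> SS \<Longrightarrow> h \<in> SS \<Longrightarrow> (\<lambda>p. f p * h p) \<in> SS"
| comp: "f \<in> SS \<Longrightarrow> G holomorphic_on UNIV \<Longrightarrow> (\<lambda>p. G (f p)) \<in> SS"
| cong: "f \<in> SS \<Longrightarrow> (\<forall>p\<in>UU. f p = h p) \<Longrightarrow> h \<in> SS"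

lemma SS_deriv:
  assumes "f \<in> SS"
  shows "\<exists>f1 f2. f1 \<in> SS \<and> (\<forall>p\<in>UU. (f has_derivative (\<lambda>q. f1 p * fst q + f2 p * snd q)) (at p))"
  using assms
proof induction
  case (cnst c)
  show ?case by (rule exI[of _ "\<lambda>p. 0"], rule exI[of _ "\<lambda>p. 0"]) (auto intro: SS.cnst)
next
  case fs
  show ?case by (rule exI[of _ "\<lambda>p. 1"], rule exI[of _ "\<lambda>p. 0"])
     (auto intro!: SS.cnst has_derivative_fst[OF has_derivative_ident, simplified])
next
  case sn
  show ?case by (rule exI[of _ "\<lambda>p. 0"], rule exI[of _ "\<lambda>p. 1"])
     (auto intro!: SS.cnst has_derivative_snd[OF has_derivative_ident, simplified])
next
  case ww
  let ?w = "\<lambda>p::complex\<times>complex. 1 / (1 - fst p * snd p)"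
  show ?case
  proof (rule exI[of _ "\<lambda>p. snd p * (?w p * ?w p)"], rule exI[of _ "\<lambda>p. fst p * (?w p * ?w p)"], intro conjI ballI)
    show "(\<lambda>p. snd p * (?w p * ?w p)) \<in> SS" by (intro SS.intros)
    fix p assume p: "p \<in> UU"
    note ne = UU_ne[OF p]
    have dfs: "((\<lambda>p. fst p * snd p) has_derivative (\<lambda>q. fst p * snd q + fst q * snd p)) (at p)"
      by (rule has_derivative_mult[OF has_derivative_fst[OF has_derivative_ident] has_derivative_snd[OF has_derivative_ident]])
    note d3 = has_derivative_divide[OF has_derivative_const has_derivative_diff[OF has_derivative_const dfs] ne]
    show "(?w has_derivative (\<lambda>q. snd p * (?w p * ?w p) * fst q + fst p * (?w p * ?w p) * snd q)) (at p)"
      apply (rule has_derivative_eq_rhs[OF d3])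
      by (auto simp: fun_eq_iff divide_inverse algebra_simps)
  qed
next
  case (add f h)
  then obtain f1 f2 h1 h2 where f: "f1 \<in> SS" "\<forall>p\<in>UU. (f has_derivative (\<lambda>q. f1 p * fst q + f2 p * snd q)) (at p)"
     and h: "h1 \<in> SS" "\<forall>p\<in>UU. (h has_derivative (\<lambda>q. h1 p * fst q + h2 p * snd q)) (at p)" by blast
  show ?case
    apply (rule exI[of _ "\<lambda>p. f1 p + h1 p"], rule exI[of _ "\<lambda>p. f2 p + h2 p"])
    using f h by (auto intro!: SS.add has_derivative_eq_rhs[OF has_derivative_add] simp: algebra_simps)
next
  case (mult f h)
  then obtain f1 f2 h1 h2 where f: "f1 \<in> SS" "\<forall>p\<in>UU. (f has_derivative (\<lambda>q. f1 p * fst q + f2 p * snd q)) (at p)"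
     and h: "h1 \<in> SS" "\<forall>p\<in>UU. (h has_derivative (\<lambda>q. h1 p * fst q + h2 p * snd q)) (at p)" by blast
  show ?case
    apply (rule exI[of _ "\<lambda>p. f p * h1 p + f1 p * h p"], rule exI[of _ "\<lambda>p. f p * h2 p + f2 p * h p"])
    using f h mult.hyps by (auto intro!: SS.add SS.mult has_derivative_eq_rhs[OF has_derivative_mult] simp: algebra_simps)
next
  case (comp f G)
  then obtain f1 f2 where f: "f1 \<in> SS" "\<forall>p\<in>UU. (f has_derivative (\<lambda>q. f1 p * fst q + f2 p * snd q)) (at p)" by blast
  have dG: "(G has_derivative (\<lambda>x. deriv G y * x)) (at y)" for y
    using holomorphic_derivI[OF comp.hyps(2) open_UNIV, of y UNIV]
    by (simp add: has_field_derivative_def)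
  show ?case
  proof (rule exI[of _ "\<lambda>p. deriv G (f p) * f1 p"], rule exI[of _ "\<lambda>p. deriv G (f p) * f2 p"], intro conjI ballI)
    show "(\<lambda>p. deriv G (f p) * f1 p) \<in> SS"
      by (rule SS.mult[OF SS.comp[OF comp.hyps(1) holomorphic_deriv[OF comp.hyps(2) open_UNIV]] f(1)])
    fix p assume p: "p \<in> UU"
    show "((\<lambda>p. G (f p)) has_derivative (\<lambda>q. deriv G (f p) * f1 p * fst q + deriv G (f p) * f2 p * snd q)) (at p)"
      apply (rule has_derivative_eq_rhs[OF has_derivative_compose[OF _ dG]])
      using f p apply blast
      by (simp add: fun_eq_iff algebra_simps)
  qed
next
  case (cong f h)
  then obtain f1 f2 where f: "f1 \<in> SS" "\<forall>p\<in>UU. (f has_derivative (\<lambda>q. f1 p * fst q + f2 p * snd q)) (at p)" by blast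
  show ?case
  proof (rule exI[of _ f1], rule exI[of _ f2], intro conjI ballI)
    show "f1 \<in> SS" by (rule f(1))
    fix p assume p: "p \<in> UU"
    from f(2) p have "(f has_derivative (\<lambda>q. f1 p * fst q + f2 p * snd q)) (at p)" by blast
    then show "(h has_derivative (\<lambda>q. f1 p * fst q + f2 p * snd q)) (at p)"
      by (rule has_derivative_transform_within_open[OF _ open_UU p]) (use cong.hyps in auto)
  qed
qed


lemma cnj_field_deriv:
  assumes "(G has_field_derivative D) (at (cnj x))"
  shows "((\<lambda>z. cnj (G (cnj z))) has_field_derivative cnj D) (at x)"
proof -
  have L: "\<forall>\<epsilon>>0. \<exists>\<delta>>0. \<forall>y. y \<noteq> cnj x \<and> cmod (y - cnj x) < \<delta> \<longrightarrow> cmod ((G y - G (cnj x)) / (y - cnj x) - D) < \<epsilon>"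
    using assms by (simp add: has_field_derivative_iff Lim_within dist_norm)
  have "\<forall>\<epsilon>>0. \<exists>\<delta>>0. \<forall>y. y \<noteq> x \<and> cmod (y - x) < \<delta> \<longrightarrow> cmod ((cnj (G (cnj y)) - cnj (G (cnj x))) / (y - x) - cnj D) < \<epsilon>"
  proof (intro allI impI)
    fix \<epsilon> :: real assume "\<epsilon> > 0"
    then obtain \<delta> where \<delta>: "\<delta> > 0" "\<forall>y. y \<noteq> cnj x \<and> cmod (y - cnj x) < \<delta> \<longrightarrow> cmod ((G y - G (cnj x)) / (y - cnj x) - D) < \<epsilon>"
      using L by blast
    show "\<exists>\<delta>>0. \<forall>y. y \<noteq> x \<and> cmod (y - x) < \<delta> \<longrightarrow> cmod ((cnj (G (cnj y)) - cnj (G (cnj x))) / (y - x) - cnj D) < \<epsilon>"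
    proof (intro exI[of _ \<delta>] conjI allI impI)
      fix y assume y: "y \<noteq> x \<and> cmod (y - x) < \<delta>"
      have "cnj y \<noteq> cnj x \<and> cmod (cnj y - cnj x) < \<delta>" using y
        by (metis complex_cnj_cancel_iff complex_cnj_diff complex_mod_cnj)
      then have "cmod ((G (cnj y) - G (cnj x)) / (cnj y - cnj x) - D) < \<epsilon>" using \<delta> by blast
      moreover have "(cnj (G (cnj y)) - cnj (G (cnj x))) / (y - x) - cnj D = cnj ((G (cnj y) - G (cnj x)) / (cnj y - cnj x) - D)"
        by simp
      ultimately show "cmod ((cnj (G (cnj y)) - cnj (G (cnj x))) / (y - x) - cnj D) < \<epsilon>"
        by (metis complex_mod_cnj)
    qed (use \<delta> in auto)
  qed
  then show ?thesis by (simp add: has_field_derivative_iff Lim_within dist_norm)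
qed

definition D1 :: "(complex \<times> complex \<Rightarrow> complex) \<Rightarrow> complex \<times> complex \<Rightarrow> complex" where
  "D1 f = (\<lambda>p. deriv (\<lambda>s. f (s, snd p)) (fst p))"

lemma D1_partial:
  assumes "(f has_derivative (\<lambda>q. A * fst q + B * snd q)) (at p)"
  shows "D1 f p = A"
proof -
  have g: "((\<lambda>s. (s, snd p)) has_derivative (\<lambda>h. (h, 0))) (at (fst p))"
    by (rule has_derivative_Pair[OF has_derivative_ident has_derivative_const])
  have f': "(f has_derivative (\<lambda>q. A * fst q + B * snd q)) (at (fst p, snd p))" using assms by simp
  have "((\<lambda>s. f (s, snd p)) has_field_derivative A) (at (fst p))"
    using has_derivative_eq_rhs[OF has_derivative_compose[OF g f'], of "(*) A"] by (simp add: fun_eq_iff has_field_derivative_def mult.commute)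
  then show ?thesis unfolding D1_def by (rule DERIV_imp_deriv)
qed

lemma SS_D1:
  assumes "f \<in> SS" shows "D1 f \<in> SS"
proof -
  obtain f1 f2 where f: "f1 \<in> SS" "\<forall>p\<in>UU. (f has_derivative (\<lambda>q. f1 p * fst q + f2 p * snd q)) (at p)"
    using SS_deriv[OF assms] by blast
  show ?thesis by (rule SS.cong[OF f(1)]) (use f(2) D1_partial in metis)
qed

lemma wirtinger_local:
  assumes "open S" "\<And>u. u \<in> S \<Longrightarrow> F u = G u" "w \<in> S"
  shows "wirtinger F w = wirtinger G w"
proof -
  obtain e where e: "e > 0" "ball w e \<subseteq> S" using assms(1,3) openE by blast
  have ev: "eventually (\<lambda>t::real. t \<in> UNIV \<longrightarrow> F (w + c * of_real t) = G (w + c * of_real t)) (nhds 0)"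
    if c: "cmod c = 1" for c
  proof -
    have "eventually (\<lambda>t::real. t \<in> ball 0 e) (nhds 0)" using e(1) by (intro eventually_nhds_in_open) auto
    then show ?thesis
    proof (rule eventually_mono)
      fix t :: real assume "t \<in> ball 0 e"
      then have "w + c * of_real t \<in> ball w e" using c by (simp add: dist_norm norm_mult)
      then show "t \<in> UNIV \<longrightarrow> F (w + c * of_real t) = G (w + c * of_real t)" using e(2) assms(2) by blast
    qed
  qed
  have "vector_derivative (\<lambda>t::real. F (w + of_real t)) (at 0) = vector_derivative (\<lambda>t::real. G (w + of_real t)) (at 0)"
    by (rule vector_derivative_cong_eq) (use ev[of 1] in auto)
  moreover have "vector_derivative (\<lambda>t::real. F (w + \<i> * of_real t)) (at 0) = vector_derivative (\<lambda>t::real. G (w + \<i> * of_real t)) (at 0)"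
    by (rule vector_derivative_cong_eq) (use ev[of \<i>] in auto)
  ultimately show ?thesis unfolding wirtinger_def by simp
qed

lemma wirtinger_step:
  assumes "f \<in> SS" "cmod w < 1"
  shows "wirtinger (\<lambda>u. f (u, cnj u)) w = D1 f (w, cnj w)"
proof -
  obtain f1 f2 where f: "f1 \<in> SS" "\<forall>p\<in>UU. (f has_derivative (\<lambda>q. f1 p * fst q + f2 p * snd q)) (at p)"
    using SS_deriv[OF assms(1)] by blast
  let ?A = "f1 (w, cnj w)" and ?B = "f2 (w, cnj w)"
  have p: "(w, cnj w) \<in> UU" using assms(2) by (simp add: UU_def)
  have fd: "(f has_derivative (\<lambda>q. ?A * fst q + ?B * snd q)) (at (w, cnj w))" using f(2) p by blast
  have D: "D1 f (w, cnj w) = ?A" by (rule D1_partial[OF fd])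
  have fd1: "(f has_derivative (\<lambda>q. ?A * fst q + ?B * snd q)) (at (w + of_real 0, cnj w + of_real 0))" using fd by simp
  have fd2: "(f has_derivative (\<lambda>q. ?A * fst q + ?B * snd q)) (at (w + \<i> * of_real 0, cnj w - \<i> * of_real 0))" using fd by simp
  have g1: "((\<lambda>t::real. (w + of_real t, cnj w + of_real t)) has_derivative (\<lambda>t. (of_real t, of_real t))) (at 0)"
    by (intro derivative_eq_intros) auto
  have g2: "((\<lambda>t::real. (w + \<i> * of_real t, cnj w - \<i> * of_real t)) has_derivative (\<lambda>t. (\<i> * of_real t, - (\<i> * of_real t)))) (at 0)"
    by (intro derivative_eq_intros) auto
  have h1: "((\<lambda>t::real. f (w + of_real t, cnj w + of_real t)) has_vector_derivative (?A + ?B)) (at 0)"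
    unfolding has_vector_derivative_def
    by (rule has_derivative_eq_rhs[OF has_derivative_compose[OF g1 fd1]])
       (simp add: fun_eq_iff scaleR_conv_of_real algebra_simps)
  have h2: "((\<lambda>t::real. f (w + \<i> * of_real t, cnj w - \<i> * of_real t)) has_vector_derivative (\<i> * ?A - \<i> * ?B)) (at 0)"
    unfolding has_vector_derivative_def
    by (rule has_derivative_eq_rhs[OF has_derivative_compose[OF g2 fd2]])
       (simp add: fun_eq_iff scaleR_conv_of_real algebra_simps)
  have e1: "(\<lambda>t::real. (\<lambda>u. f (u, cnj u)) (w + of_real t)) = (\<lambda>t::real. f (w + of_real t, cnj w + of_real t))"
    by simp
  have e2: "(\<lambda>t::real. (\<lambda>u. f (u, cnj u)) (w + \<i> * of_real t)) = (\<lambda>t::real. f (w + \<i> * of_real t, cnj w - \<i> * of_real t))"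
    by (simp add: fun_eq_iff)
  have ii: "\<i> * (\<i> * ?A - \<i> * ?B) = ?B - ?A" by (simp add: algebra_simps)
  show ?thesis unfolding wirtinger_def e1 e2 D vector_derivative_at[OF h1] vector_derivative_at[OF h2] ii
    by simp
qed

lemma wirtinger_iter:
  assumes "f \<in> SS" "\<And>u. u \<in> ball 0 1 \<Longrightarrow> F u = f (u, cnj u)"
  shows "(D1 ^^ n) f \<in> SS \<and> (\<forall>w \<in> ball 0 1. (wirtinger ^^ n) F w = (D1 ^^ n) f (w, cnj w))"
proof (induction n)
  case 0
  then show ?case using assms by simp
next
  case (Suc n)
  then have S: "(D1 ^^ n) f \<in> SS" and I: "\<forall>w \<in> ball 0 1. (wirtinger ^^ n) F w = (D1 ^^ n) f (w, cnj w)" by auto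
  have "(wirtinger ^^ Suc n) F w = (D1 ^^ Suc n) f (w, cnj w)" if w: "w \<in> ball 0 1" for w
  proof -
    have "(wirtinger ^^ Suc n) F w = wirtinger ((wirtinger ^^ n) F) w" by simp
    also have "\<dots> = wirtinger (\<lambda>u. (D1 ^^ n) f (u, cnj u)) w"
      by (rule wirtinger_local[OF open_ball _ w]) (use I in auto)
    also have "\<dots> = D1 ((D1 ^^ n) f) (w, cnj w)"
      by (rule wirtinger_step[OF S]) (use w in simp)
    finally show ?thesis by simp
  qed
  then show ?case using SS_D1[OF S] by simp
qed

lemma D1_pow: "(D1 ^^ n) f p = (deriv ^^ n) (\<lambda>s. f (s, snd p)) (fst p)"
proof (induction n arbitrary: p)
  case 0 then show ?case by simp
next
  case (Suc n)
  have "(D1 ^^ Suc n) f p = deriv (\<lambda>s. (D1 ^^ n) f (s, snd p)) (fst p)" by (simp add: D1_def)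
  also have "(\<lambda>s. (D1 ^^ n) f (s, snd p)) = (\<lambda>s. (deriv ^^ n) (\<lambda>s. f (s, snd p)) s)"
    using Suc by simp
  finally show ?case by simp
qed

lemma deriv_affine:
  assumes "G holomorphic_on UNIV"
  shows "(deriv ^^ n) (\<lambda>s. G (\<alpha> + k * s)) = (\<lambda>s. k ^ n * (deriv ^^ n) G (\<alpha> + k * s))"
proof (induction n)
  case 0 then show ?case by simp
next
  case (Suc n)
  have hn: "(deriv ^^ n) G holomorphic_on UNIV" by (rule holomorphic_higher_deriv[OF assms open_UNIV])
  have "((\<lambda>s. k ^ n * (deriv ^^ n) G (\<alpha> + k * s)) has_field_derivative k ^ Suc n * (deriv ^^ Suc n) G (\<alpha> + k * s)) (at s)" for s
  proof -
    have a: "((\<lambda>s. \<alpha> + k * s) has_field_derivative k) (at s)" by (auto intro!: derivative_eq_intros)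
    have "((\<lambda>s. (deriv ^^ n) G (\<alpha> + k * s)) has_field_derivative deriv ((deriv ^^ n) G) (\<alpha> + k * s) * k) (at s)"
      by (rule DERIV_chain2[OF holomorphic_derivI[OF hn open_UNIV] a]) simp
    from DERIV_cmult[OF this, of "k ^ n"] show ?thesis by (simp add: algebra_simps)
  qed
  note der = this
  have "(deriv ^^ Suc n) (\<lambda>s. G (\<alpha> + k * s)) = deriv ((deriv ^^ n) (\<lambda>s. G (\<alpha> + k * s)))" by simp
  also have "\<dots> = deriv (\<lambda>s. k ^ n * (deriv ^^ n) G (\<alpha> + k * s))" by (simp only: Suc.IH)
  also have "\<dots> = (\<lambda>s. k ^ Suc n * (deriv ^^ Suc n) G (\<alpha> + k * s))" using der by (auto intro!: ext DERIV_imp_deriv)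
  finally show ?case .
qed

lemma deriv_cnj_pow:
  assumes "G holomorphic_on UNIV"
  shows "(deriv ^^ n) (\<lambda>x. cnj (G (cnj x))) = (\<lambda>x. cnj ((deriv ^^ n) G (cnj x)))"
proof (induction n)
  case 0 then show ?case by simp
next
  case (Suc n)
  have hn: "(deriv ^^ n) G holomorphic_on UNIV" by (rule holomorphic_higher_deriv[OF assms open_UNIV])
  have "((\<lambda>x. cnj ((deriv ^^ n) G (cnj x))) has_field_derivative cnj ((deriv ^^ Suc n) G (cnj x))) (at x)" for x
    using cnj_field_deriv[OF holomorphic_derivI[OF hn open_UNIV, of "cnj x" UNIV]] by simp
  note der = this
  have "(deriv ^^ Suc n) (\<lambda>x. cnj (G (cnj x))) = deriv ((deriv ^^ n) (\<lambda>x. cnj (G (cnj x))))" by simp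
  also have "\<dots> = deriv (\<lambda>x. cnj ((deriv ^^ n) G (cnj x)))" by (simp only: Suc.IH)
  also have "\<dots> = (\<lambda>x. cnj ((deriv ^^ Suc n) G (cnj x)))" using der by (auto intro!: ext DERIV_imp_deriv)
  finally show ?case .
qed

lemma cnj_holo:
  assumes "G holomorphic_on UNIV"
  shows "(\<lambda>x. cnj (G (cnj x))) holomorphic_on UNIV"
  unfolding holomorphic_on_def field_differentiable_def
  using cnj_field_deriv[OF holomorphic_derivI[OF assms open_UNIV]] has_field_derivative_at_within by blast



lemma SS_diff: assumes f: "f \<in> SS" and h: "h \<in> SS" shows "(\<lambda>p. f p - h p) \<in> SS"
proof -
  have "(\<lambda>p. f p + (-1) * h p) \<in> SS" by (rule SS.add[OF f SS.mult[OF SS.cnst h]])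
  then show ?thesis by (rule SS.cong) auto
qed

lemma norm_prod_ne: "cmod x < 1 \<Longrightarrow> cmod y < 1 \<Longrightarrow> 1 + x * y \<noteq> 0"
proof
  assume x: "cmod x < 1" and y: "cmod y < 1" and e: "1 + x * y = 0"
  have "cmod x * cmod y \<le> cmod x" using mult_left_le[of "cmod y" "cmod x"] y by simp
  then have "cmod (x * y) < 1" using x by (simp add: norm_mult)
  moreover have "x * y = -1" using e by (simp add: add_eq_0_iff)
  ultimately show False by simp
qed

lemma norm_sq_ne: "cmod x < 1 \<Longrightarrow> 1 - x * cnj x \<noteq> 0"
proof
  assume x: "cmod x < 1" and e: "1 - x * cnj x = 0"
  have x1: "x * cnj x = 1" using e by simp
  have "complex_of_real ((cmod x)\<^sup>2) = 1" by (simp only: complex_norm_square x1)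
  then have "(cmod x)\<^sup>2 = 1" by (rule of_real_eq_1_iff[THEN iffD1])
  moreover have "(cmod x)\<^sup>2 < 1" using x by (simp add: abs_square_less_1)
  ultimately show False by simp
qed

lemma qfun_eq: "qfun w = (1 - w) * cnj (1 - w) / (1 - w * cnj w)"
  unfolding qfun_def by (simp only: of_real_divide of_real_diff of_real_1 complex_norm_square)

lemma qfun_disc:
  assumes z: "cmod z < 1" and u: "cmod u < 1"
  shows "qfun (disc_aut z u) = (1 / (1 - z * cnj z)) * (((1 - z) - cnj (1 - z) * u) *
           ((cnj (1 - z) - (1 - z) * cnj u) * (1 / (1 - u * cnj u))))"
proof -
  define T where "T = disc_aut z u"
  have d1: "1 + cnj z * u \<noteq> 0" using norm_prod_ne[of "cnj z" u] z u by simp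
  have d2: "1 + z * cnj u \<noteq> 0" using norm_prod_ne[of z "cnj u"] z u by simp
  have nz: "1 - z * cnj z \<noteq> 0" by (rule norm_sq_ne[OF z])
  have nu: "1 - u * cnj u \<noteq> 0" by (rule norm_sq_ne[OF u])
  have cT: "cnj T = (cnj z + cnj u) / (1 + z * cnj u)" by (simp add: T_def disc_aut_def)
  have e1: "1 - T = ((1 - z) - cnj (1 - z) * u) / (1 + cnj z * u)"
    using d1 by (simp add: T_def disc_aut_def field_simps)
  have e2: "cnj (1 - T) = (cnj (1 - z) - (1 - z) * cnj u) / (1 + z * cnj u)"
    using d2 by (simp add: cT field_simps)
  have dd: "(1 + cnj z * u) * (1 + z * cnj u) \<noteq> 0" using d1 d2 by simp
  have tt: "T * cnj T = (z + u) * (cnj z + cnj u) / ((1 + cnj z * u) * (1 + z * cnj u))"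
    by (simp add: cT T_def disc_aut_def)
  have "1 - T * cnj T = ((1 + cnj z * u) * (1 + z * cnj u) - (z + u) * (cnj z + cnj u)) / ((1 + cnj z * u) * (1 + z * cnj u))"
    unfolding tt using dd by (simp add: divide_simps)
  also have "(1 + cnj z * u) * (1 + z * cnj u) - (z + u) * (cnj z + cnj u) = (1 - z * cnj z) * (1 - u * cnj u)"
    by (simp add: algebra_simps)
  finally have e3: "1 - T * cnj T = (1 - z * cnj z) * (1 - u * cnj u) / ((1 + cnj z * u) * (1 + z * cnj u))" .
  have gen: "\<And>X Y C d1 d2::complex. d1 \<noteq> 0 \<Longrightarrow> d2 \<noteq> 0 \<Longrightarrow> (X / d1 * (Y / d2)) / (C / (d1 * d2)) = X * Y / C"
    by (simp add: divide_simps)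
  have gen2: "\<And>X Y C V::complex. X * Y / (C * V) = (1 / C) * (X * (Y * (1 / V)))"
    by (simp add: divide_inverse mult_ac)
  have "qfun T = (1 - T) * cnj (1 - T) / (1 - T * cnj T)" by (rule qfun_eq)
  also have "\<dots> = (((1 - z) - cnj (1 - z) * u) / (1 + cnj z * u) * ((cnj (1 - z) - (1 - z) * cnj u) / (1 + z * cnj u)))
     / ((1 - z * cnj z) * (1 - u * cnj u) / ((1 + cnj z * u) * (1 + z * cnj u)))"
    unfolding e2 unfolding e3 unfolding e1 by (rule refl)
  also have "\<dots> = ((1 - z) - cnj (1 - z) * u) * (cnj (1 - z) - (1 - z) * cnj u) / ((1 - z * cnj z) * (1 - u * cnj u))"
    by (rule gen[OF d1 d2])
  also have "\<dots> = (1 / (1 - z * cnj z)) * (((1 - z) - cnj (1 - z) * u) *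
           ((cnj (1 - z) - (1 - z) * cnj u) * (1 / (1 - u * cnj u))))"
    by (rule gen2)
  finally show ?thesis unfolding T_def .
qed

lemma pow_lemma: "(- (x\<^sup>2) / c) ^ n = (-1) ^ n * x ^ (2 * n) / (c::complex) ^ n"
proof -
  have "(- (x\<^sup>2) / c) ^ n = ((-1) * x\<^sup>2) ^ n / c ^ n" by (simp only: mult_minus1 power_divide)
  also have "\<dots> = (-1) ^ n * (x\<^sup>2) ^ n / c ^ n" by (simp only: power_mult_distrib)
  also have "(x\<^sup>2) ^ n = x ^ (2 * n)" by (simp only: power_mult)
  finally show ?thesis .
qed

lemma PM_D_formula:
  assumes G: "G holomorphic_on UNIV" and z: "cmod z < 1"
  shows "PM_D n (G \<circ> qfun) z = (-1) ^ n * (1 - cnj z) ^ (2 * n) / of_real ((1 - (cmod z)\<^sup>2) ^ n)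
             * (deriv ^^ n) G (qfun z)"
proof -
  define a where "a = 1 - z"
  define c where "c = 1 - z * cnj z"
  define \<Phi> where "\<Phi> = (\<lambda>p. (1 / c) * ((a - cnj a * fst p) * ((cnj a - a * snd p) * (1 / (1 - fst p * snd p)))))"
  have PS: "\<Phi> \<in> SS" unfolding \<Phi>_def
    by (rule SS.mult[OF SS.cnst SS.mult[OF SS_diff[OF SS.cnst SS.mult[OF SS.cnst SS.fs]]
          SS.mult[OF SS_diff[OF SS.cnst SS.mult[OF SS.cnst SS.sn]] SS.ww]]])
  define H where "H = (\<lambda>p. G (\<Phi> p))"
  have HS: "H \<in> SS" unfolding H_def by (rule SS.comp[OF PS G])
  have loc: "(G \<circ> qfun) (disc_aut z u) = H (u, cnj u)" if "u \<in> ball 0 1" for u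
    using qfun_disc[OF z, of u] that by (simp add: H_def \<Phi>_def a_def c_def)
  have "PM_D n (G \<circ> qfun) z = (wirtinger ^^ n) (\<lambda>u. (G \<circ> qfun) (disc_aut z u)) 0"
    by (simp add: PM_D_def)
  also have "\<dots> = (D1 ^^ n) H (0, cnj 0)"
    using wirtinger_iter[OF HS, of "\<lambda>u. (G \<circ> qfun) (disc_aut z u)" n] loc by simp
  also have "\<dots> = (deriv ^^ n) (\<lambda>s. H (s, 0)) 0" by (simp add: D1_pow)
  also have "(\<lambda>s. H (s, 0)) = (\<lambda>s. G (a * cnj a / c + (- ((cnj a)\<^sup>2) / c) * s))"
  proof
    fix s
    have "c \<noteq> 0" unfolding c_def by (rule norm_sq_ne[OF z])
    then have "\<Phi> (s, 0) = a * cnj a / c + (- ((cnj a)\<^sup>2) / c) * s"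
      by (simp add: \<Phi>_def field_simps power2_eq_square)
    then show "H (s, 0) = G (a * cnj a / c + (- ((cnj a)\<^sup>2) / c) * s)" by (simp add: H_def)
  qed
  also have "(deriv ^^ n) \<dots> 0 = (- ((cnj a)\<^sup>2) / c) ^ n * (deriv ^^ n) G (a * cnj a / c)"
    unfolding deriv_affine[OF G] by simp
  also have "a * cnj a / c = qfun z" by (simp add: qfun_eq a_def c_def)
  also have "c = of_real (1 - (cmod z)\<^sup>2)" by (simp only: c_def of_real_diff of_real_1 complex_norm_square)
  finally have X: "PM_D n (G \<circ> qfun) z = (- ((cnj a)\<^sup>2) / of_real (1 - (cmod z)\<^sup>2)) ^ n * (deriv ^^ n) G (qfun z)" .
  show ?thesis unfolding X pow_lemma a_def complex_cnj_diff complex_cnj_one of_real_power ..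
qed


theorem mainTheorem15:
  fixes g g' :: "complex \<Rightarrow> complex" and n :: nat and z :: complex
  assumes "g holomorphic_on UNIV" and "g' holomorphic_on UNIV"
    and "z \<in> ball 0 1"
  shows "PM_D n (g \<circ> qfun) z
           = (-1) ^ n * (1 - cnj z) ^ (2 * n) / of_real ((1 - (cmod z)\<^sup>2) ^ n)
             * (deriv ^^ n) g (qfun z)
       \<and> PM_Dbar n (g \<circ> qfun) z
           = (-1) ^ n * (1 - z) ^ (2 * n) / of_real ((1 - (cmod z)\<^sup>2) ^ n)
             * (deriv ^^ n) g (qfun z)
       \<and> PM_Dbar n (g \<circ> qfun) z * PM_D n (g' \<circ> qfun) z
           = qfun z ^ (2 * n) * (deriv ^^ n) g (qfun z) * (deriv ^^ n) g' (qfun z)"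
proof -
  have z: "cmod z < 1" using assms(3) by simp
  define R where "R = complex_of_real ((1 - (cmod z)\<^sup>2) ^ n)"
  have P1: "PM_D n (g \<circ> qfun) z = (-1) ^ n * (1 - cnj z) ^ (2 * n) / R * (deriv ^^ n) g (qfun z)"
    using PM_D_formula[OF assms(1) z] unfolding R_def .
  have P1': "PM_D n (g' \<circ> qfun) z = (-1) ^ n * (1 - cnj z) ^ (2 * n) / R * (deriv ^^ n) g' (qfun z)"
    using PM_D_formula[OF assms(2) z] unfolding R_def .
  define gs where "gs = (\<lambda>x. cnj (g (cnj x)))"
  have gsh: "gs holomorphic_on UNIV" unfolding gs_def by (rule cnj_holo[OF assms(1)])
  have cq: "cnj (qfun w) = qfun w" for w by (simp add: qfun_def)
  have eq: "(\<lambda>w. cnj ((g \<circ> qfun) w)) = gs \<circ> qfun" by (simp add: fun_eq_iff gs_def cq)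
  have cR: "cnj R = R" by (simp add: R_def)
  have "PM_Dbar n (g \<circ> qfun) z = cnj (PM_D n (gs \<circ> qfun) z)" unfolding PM_Dbar_def eq ..
  also have "\<dots> = cnj ((-1) ^ n * (1 - cnj z) ^ (2 * n) / R * (deriv ^^ n) gs (qfun z))"
    using PM_D_formula[OF gsh z] unfolding R_def by simp
  also have "(deriv ^^ n) gs (qfun z) = cnj ((deriv ^^ n) g (qfun z))"
    unfolding gs_def deriv_cnj_pow[OF assms(1)] cq ..
  finally have P2: "PM_Dbar n (g \<circ> qfun) z = (-1) ^ n * (1 - z) ^ (2 * n) / R * (deriv ^^ n) g (qfun z)"
    by (simp add: cR o_def)
  have m1: "(-1::complex) ^ n * (-1) ^ n = 1" by (simp add: power_mult_distrib[symmetric])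
  have qz: "qfun z ^ (2 * n) = (1 - z) ^ (2 * n) * (1 - cnj z) ^ (2 * n) / (R * R)"
  proof -
    have c: "complex_of_real (1 - (cmod z)\<^sup>2) = 1 - z * cnj z" by (simp only: of_real_diff of_real_1 complex_norm_square)
    have "R = (1 - z * cnj z) ^ n" unfolding R_def of_real_power[of "1 - (cmod z)\<^sup>2" n] c ..
    then have "R * R = (1 - z * cnj z) ^ (2 * n)" by (simp add: power_mult[symmetric] power2_eq_square[symmetric] mult.commute)
    then show ?thesis unfolding qfun_eq by (simp add: power_mult_distrib power_divide)
  qed
  have fin: "(-1) ^ n * (1 - z) ^ (2 * n) / R * (deriv ^^ n) g (qfun z) *
      ((-1) ^ n * (1 - cnj z) ^ (2 * n) / R * (deriv ^^ n) g' (qfun z))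
      = ((-1::complex) ^ n * (-1) ^ n) * ((1 - z) ^ (2 * n) * (1 - cnj z) ^ (2 * n) / (R * R)
         * (deriv ^^ n) g (qfun z) * (deriv ^^ n) g' (qfun z))"
    by (simp add: divide_inverse mult_ac)
  show ?thesis
    unfolding R_def[symmetric] using P1 P2 P1' fin m1 qz by (simp add: o_def)
qed

end
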